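(* Let $A\in\mathbb{R}^{n\times d}$ and let $k$ be a positive integer. Then $$\sum_{i=1}^{d}\bar\tau_i(A)\le 2k.$$
   Context: $A$ has columns $a_1,\dots,a_d$. $A_k$ denotes a best rank-$k$ approximation of $A$ in Frobenius norm (obtained from a truncated SVD), so $\|A-A_k\|_F^2=\sum_{j>k}\sigma_j(A)^2$. $M^+$ denotes the Moore–Penrose pseudoinverse. The ($k$-)ridge leverage score of the $i$-th column of $A$ is $$\bar\tau_i(A)=a_i^T\Big(AA^T+\tfrac{\|A-A_k\|_F^2}{k}I_n\Big)^+a_i .$$ *)

theory Defs
  imports "HOL-Analysis.Analysis"
begin

text \<open>Squared Frobenius norm of a real matrix.\<close>
definition frob_sq :: "real^'d^'n \<Rightarrow> real" where
  "frob_sq M = (\<Sum>i\<in>UNIV. \<Sum>j\<in>UNIV. (M $ i $ j)^2)"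

text \<open>Squared Frobenius error of a best rank-k approximation A_k of A:
  the minimum of the squared Frobenius distance from A to matrices of rank at most k
  (equal to the sum of the squared singular values beyond the k-th).\<close>
definition best_rank_err :: "real^'d^'n \<Rightarrow> nat \<Rightarrow> real" where
  "best_rank_err A k = Inf {frob_sq (A - B) | B. rank B \<le> k}"

text \<open>Moore--Penrose pseudoinverse, as the unique matrix satisfying the Penrose equations.\<close>
definition pinv :: "real^'m^'n \<Rightarrow> real^'n^'m" where
  "pinv M = (THE X. M ** X ** M = M \<and> X ** M ** X = X \<and>
                    transpose (M ** X) = M ** X \<and> transpose (X ** M) = X ** M)"

text \<open>k-ridge leverage score of the i-th column of A.\<close>
definition ridge_lev :: "real^'d^'n \<Rightarrow> nat \<Rightarrow> 'd \<Rightarrow> real" where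
  "ridge_lev A k i =
     column i A \<bullet> (pinv (A ** transpose A + mat (best_rank_err A k / real k)) *v column i A)"

end

theory Submission
  imports Defs
begin


lemma inner_mv: "(A *v x) \<bullet> y = x \<bullet> (transpose A *v (y::real^'m))" for A :: "real^'n^'m"
  by (metis dot_lmul_matrix inner_commute transpose_matrix_vector)

context
  fixes M :: "real^'n^'n"
  assumes sym: "transpose M = M"
begin

definition "chM y w \<longleftrightarrow> w \<in> span (rows M) \<and> (\<forall>v\<in>span (rows M). (y - M *v w) \<bullet> v = 0)"

lemma MinR: "M *v x \<in> span (rows M)"
  by (metis columns_transpose matrix_vector_mult_in_columnspace sym)

lemma Msym_inner: "(M *v a) \<bullet> b = a \<bullet> (M *v b)"
  using inner_mv[of M a b] sym by simp

lemma perp_null: assumes "\<forall>v\<in>span (rows M). z \<bullet> v = 0" shows "M *v z = 0"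
proof -
  have "(M *v z) \<bullet> (M *v z) = z \<bullet> (M *v (M *v z))" by (rule Msym_inner)
  also have "\<dots> = 0" using assms MinR by blast
  finally show ?thesis by simp
qed

lemma range_sub: "span (rows M) \<subseteq> range ((*v) M)"
proof -
  have "rows M = columns M" by (metis columns_transpose sym)
  moreover have "columns M \<subseteq> range ((*v) M)"
    by (auto simp: columns_def matrix_vector_mult_basis[symmetric])
  moreover have "subspace (range ((*v) M))"
    by (rule linear_subspace_image[OF matrix_vector_mul_linear subspace_UNIV])
  ultimately show ?thesis by (metis span_minimal)
qed

lemma chM_ex: "\<exists>w. chM y w"
proof -
  obtain p z where p: "p \<in> span (span (rows M))" and z: "\<And>w. w \<in> span (span (rows M)) \<Longrightarrow> orthogonal z w"
     and yz: "y = p + z"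
    using orthogonal_subspace_decomp_exists[of "span (rows M)" y] by blast
  from p have "p \<in> span (rows M)" by (simp add: span_span)
  then obtain w0 where w0: "p = M *v w0" using range_sub by blast
  obtain w z' where w: "w \<in> span (span (rows M))" and z': "\<And>v. v \<in> span (span (rows M)) \<Longrightarrow> orthogonal z' v"
     and wz: "w0 = w + z'"
    using orthogonal_subspace_decomp_exists[of "span (rows M)" w0] by blast
  have "M *v z' = 0" using z' by (intro perp_null) (simp add: orthogonal_def span_span)
  then have "M *v w = p" using w0 wz by (simp add: matrix_vector_right_distrib)
  then have "chM y w" using w z yz by (simp add: chM_def orthogonal_def span_span)
  then show ?thesis ..
qed

lemma chM_uniq: assumes "chM y w" "chM y w'" shows "w = w'"
proof -
  have perp: "\<forall>v\<in>span (rows M). (M *v (w - w')) \<bullet> v = 0"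
  proof
    fix v assume v: "v \<in> span (rows M)"
    have "M *v (w - w') = (y - M *v w') - (y - M *v w)" by (simp add: matrix_vector_mult_diff_distrib)
    then show "(M *v (w - w')) \<bullet> v = 0" using assms v by (simp add: chM_def inner_diff_left)
  qed
  have "(M *v (w - w')) \<bullet> (M *v (w - w')) = 0" using perp MinR by blast
  then have "M *v (w - w') = 0" by simp
  moreover have "w - w' \<in> span (rows M)" using assms by (simp add: chM_def span_diff)
  ultimately show ?thesis using nullspace_inter_rowspace[of M "w - w'"] by simp
qed

definition "gM y = (THE w. chM y w)"

lemma gM: "chM y (gM y)"
  unfolding gM_def by (rule theI') (use chM_ex chM_uniq in blast)

lemma gM_eq: "chM y w \<Longrightarrow> gM y = w"
  using gM chM_uniq by blast

lemma gM_lin: "linear gM"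
proof (rule linearI)
  fix x y
  have "chM (x + y) (gM x + gM y)"
    using gM[of x] gM[of y]
    by (auto simp: chM_def span_add matrix_vector_right_distrib algebra_simps inner_add_left inner_diff_left)
  then show "gM (x + y) = gM x + gM y" by (rule gM_eq)
next
  fix c :: real and x
  have "chM (c *\<^sub>R x) (c *\<^sub>R gM x)"
    using gM[of x]
    by (auto simp: chM_def span_mul matrix_vector_mult_scaleR inner_diff_left
        simp flip: scaleR_right_diff_distrib)
  then show "gM (c *\<^sub>R x) = c *\<^sub>R gM x" by (rule gM_eq)
qed

definition "XM = matrix gM"

lemma XM_app: "XM *v y = gM y"
  unfolding XM_def using gM_lin by (simp add: matrix_vector_mul(2))

lemma MgM: "M *v gM (M *v v) = M *v v"
proof -
  have c: "chM (M *v v) (gM (M *v v))" by (rule gM)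
  let ?d = "M *v v - M *v gM (M *v v)"
  have "?d \<in> span (rows M)" by (simp add: MinR span_diff)
  then have "?d \<bullet> ?d = 0" using c by (simp add: chM_def)
  then show ?thesis by simp
qed

lemma gMMg: "gM (M *v gM y) = gM y"
  by (rule gM_eq) (use gM[of y] in \<open>simp add: chM_def\<close>)

lemma gM_sym: "gM y \<bullet> z = y \<bullet> gM z"
proof -
  have "gM y \<bullet> z = gM y \<bullet> (M *v gM z)"
  proof -
    have "(z - M *v gM z) \<bullet> gM y = 0" using gM[of z] gM[of y] by (simp add: chM_def)
    then show ?thesis by (simp add: inner_diff_right inner_commute)
  qed
  also have "\<dots> = (M *v gM y) \<bullet> gM z" by (simp add: Msym_inner)
  also have "\<dots> = y \<bullet> gM z"
  proof -
    have "(y - M *v gM y) \<bullet> gM z = 0" using gM[of z] gM[of y] by (simp add: chM_def)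
    then show ?thesis by (simp add: inner_diff_left)
  qed
  finally show ?thesis .
qed

lemma gM_comm: "gM (M *v z) = M *v gM z"
proof (rule gM_eq)
  have "M *v (z - M *v gM z) = 0"
    by (rule perp_null) (use gM[of z] in \<open>simp add: chM_def\<close>)
  then show "chM (M *v z) (M *v gM z)"
    by (simp add: chM_def MinR matrix_vector_mult_diff_distrib flip: matrix_vector_mult_diff_distrib)
qed

lemma MgM_sym: "(M *v gM y) \<bullet> z = y \<bullet> (M *v gM z)"
  using gM_sym[of y "M *v z"] by (simp add: Msym_inner gM_comm)

lemma sym_from_inner:
  fixes Y :: "real^'n^'n"
  assumes "\<And>y z. (Y *v y) \<bullet> z = y \<bullet> (Y *v z)"
  shows "transpose Y = Y"
proof -
  have "\<And>z. transpose Y *v z = Y *v z"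
  proof -
    fix z
    have "\<And>y. y \<bullet> (transpose Y *v z - Y *v z) = 0"
      using assms by (simp add: inner_diff_right inner_mv)
    then show "transpose Y *v z = Y *v z" by (metis inner_eq_zero_iff right_minus_eq)
  qed
  then show ?thesis by (simp add: matrix_eq)
qed

lemma XM_penrose:
  "M ** XM ** M = M \<and> XM ** M ** XM = XM \<and>
   transpose (M ** XM) = M ** XM \<and> transpose (XM ** M) = XM ** M"
proof (intro conjI)
  show "M ** XM ** M = M"
    by (simp add: matrix_eq XM_app MgM flip: matrix_vector_mul_assoc)
  show "XM ** M ** XM = XM"
    by (simp add: matrix_eq XM_app gMMg flip: matrix_vector_mul_assoc)
  show "transpose (M ** XM) = M ** XM"
    by (rule sym_from_inner) (simp add: XM_app MgM_sym flip: matrix_vector_mul_assoc)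
  show "transpose (XM ** M) = XM ** M"
    by (rule sym_from_inner) (simp add: XM_app gM_sym Msym_inner gM_comm flip: matrix_vector_mul_assoc)
qed

end


lemma mp_unique:
  fixes M :: "real^'n^'m" and X Y :: "real^'m^'n"
  assumes X1: "M ** X ** M = M" and X2: "X ** M ** X = X" and X3: "transpose (M ** X) = M ** X"
      and X4: "transpose (X ** M) = X ** M"
      and Y1: "M ** Y ** M = M" and Y2: "Y ** M ** Y = Y" and Y3: "transpose (M ** Y) = M ** Y"
      and Y4: "transpose (Y ** M) = Y ** M"
  shows "X = Y"
proof -
  have tM: "transpose M = transpose M ** transpose Y ** transpose M"
    by (metis Y1 matrix_transpose_mul matrix_mul_assoc)
  have tM2: "transpose M = transpose M ** transpose X ** transpose M"
    by (metis X1 matrix_transpose_mul matrix_mul_assoc)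
  have "X = X ** (M ** X)" using X2 by (simp add: matrix_mul_assoc)
  also have "\<dots> = X ** transpose X ** transpose M" using X3
    by (metis matrix_transpose_mul matrix_mul_assoc)
  also have "\<dots> = X ** transpose X ** (transpose M ** transpose Y ** transpose M)" using tM by simp
  also have "\<dots> = X ** (transpose X ** transpose M) ** (transpose Y ** transpose M)"
    by (simp add: matrix_mul_assoc)
  also have "\<dots> = X ** (M ** X) ** (M ** Y)"
    using X3 Y3 by (metis matrix_transpose_mul)
  also have "\<dots> = (X ** M ** X) ** M ** Y" by (simp add: matrix_mul_assoc)
  also have "\<dots> = X ** M ** Y" using X2 by simp
  finally have xx: "X = X ** M ** Y" .
  have "Y = (Y ** M) ** Y" using Y2 by simp
  also have "\<dots> = transpose M ** transpose Y ** Y" using Y4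
    by (metis matrix_transpose_mul)
  also have "\<dots> = (transpose M ** transpose X ** transpose M) ** transpose Y ** Y" using tM2 by simp
  also have "\<dots> = (transpose M ** transpose X) ** (transpose M ** transpose Y) ** Y"
    by (simp add: matrix_mul_assoc)
  also have "\<dots> = (X ** M) ** (Y ** M) ** Y"
    using X4 Y4 by (metis matrix_transpose_mul)
  also have "\<dots> = X ** M ** (Y ** M ** Y)" by (simp add: matrix_mul_assoc)
  also have "\<dots> = X ** M ** Y" using Y2 by simp
  finally show ?thesis using xx by simp
qed

lemma approx_lemma:
  fixes A B :: "real^'d^'n" and k :: nat
  assumes rk: "rank B \<le> k"
  shows "\<exists>y e. (\<forall>i. column i A = A *v y i + e i) \<and> (\<Sum>i\<in>UNIV. y i \<bullet> y i) \<le> real k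
          \<and> (\<Sum>i\<in>UNIV. e i \<bullet> e i) \<le> frob_sq (A - B)"
proof -
  obtain W where WS: "W \<subseteq> span (rows B)" and orth: "pairwise orthogonal W"
    and n1: "\<And>x. x \<in> W \<Longrightarrow> norm x = 1" and ind: "independent W"
    and cW: "card W = dim (span (rows B))" and spW: "span W = span (rows B)"
    using orthonormal_basis_subspace[OF subspace_span[of "rows B"]] by metis
  have fin: "finite W" using ind by (rule independent_imp_finite)
  have ww: "w \<bullet> w' = (if w = w' then 1 else 0)" if "w \<in> W" "w' \<in> W" for w w'
    using that orth n1[of w] by (auto simp: pairwise_def orthogonal_def norm_eq_1)
  define s where "s q z = (\<Sum>w\<in>W. (w \<bullet> q) * (w \<bullet> z))" for q z :: "real^'d"
  define P where "P q = (\<Sum>w\<in>W. (w \<bullet> q) *\<^sub>R w)" for q :: "real^'d"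
  have Pz: "P q \<bullet> z = s q z" for q z
    by (simp add: P_def s_def inner_sum_left)
  have wP: "w0 \<bullet> P q = w0 \<bullet> q" if "w0 \<in> W" for w0 q
  proof -
    have "w0 \<bullet> P q = (\<Sum>w\<in>W. (w \<bullet> q) * (if w0 = w then 1 else 0))"
      by (simp add: P_def inner_sum_right ww[OF that])
    also have "\<dots> = w0 \<bullet> q" using fin that by (simp add: if_distrib sum.delta cong: if_cong)
    finally show ?thesis .
  qed
  have PP: "P q \<bullet> P z = s q z" for q z
  proof -
    have "P q \<bullet> P z = (\<Sum>w\<in>W. (w \<bullet> q) * (w \<bullet> P z))"
      unfolding P_def[of q] by (simp add: inner_sum_left)
    then show ?thesis by (simp add: wP s_def)
  qed
  have s_sym: "s q z = s z q" for q z by (simp add: s_def mult.commute)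
  have PinW: "P q \<in> span W" for q
    by (simp add: P_def span_sum span_mul span_base)
  have perp: "(q - P q) \<bullet> b = 0" if "b \<in> span W" for q b
    using that
  proof (induction rule: span_induct)
    case base
    show ?case by (auto simp: subspace_def inner_add_right)
  next
    case (step w)
    then show ?case by (simp add: inner_diff_left inner_diff_right inner_commute wP)
  qed
  have Pid: "P b = b" if "b \<in> span W" for b
  proof -
    have "(b - P b) \<bullet> (b - P b) = 0" using perp that PinW by (simp add: span_diff)
    then show ?thesis by simp
  qed
  have Pcontr: "(q - P q) \<bullet> (q - P q) \<le> q \<bullet> q" for q
  proof -
    have "(q - P q) \<bullet> P q = 0" using perp PinW by blast
    then have "q \<bullet> q = (q - P q) \<bullet> (q - P q) + P q \<bullet> P q"
      by (simp add: inner_diff_left inner_diff_right inner_commute)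
    then show ?thesis by simp
  qed
  have Plin: "P (a - b) = P a - P b" for a b
    by (simp add: P_def inner_diff_right scaleR_diff_left sum_subtractf)
  define y where "y i = P (axis i 1)" for i :: 'd
  define e where "e i = column i A - A *v y i" for i
  have dec: "\<forall>i. column i A = A *v y i + e i" by (simp add: e_def)
  have Y: "(\<Sum>i\<in>UNIV. y i \<bullet> y i) \<le> real k"
  proof -
    have "(\<Sum>i\<in>UNIV. y i \<bullet> y i) = (\<Sum>i\<in>UNIV. \<Sum>w\<in>W. (w $ i) * (w $ i))"
      by (simp add: y_def PP s_def inner_axis)
    also have "\<dots> = (\<Sum>w\<in>W. w \<bullet> w)"
      by (subst sum.swap) (simp add: inner_vec_def)
    also have "\<dots> = real (card W)" using n1 by (simp add: norm_eq_1)
    also have "\<dots> \<le> real k" using cW rk by (simp add: row_rank_def)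
    finally show ?thesis .
  qed
  have ecomp: "e i $ j = (A $ j - P (A $ j)) $ i" for i j
  proof -
    have "(A *v y i) $ j = s (A $ j) (axis i 1)"
      using Pz[of "axis i 1" "A $ j"] s_sym[of "axis i 1" "A $ j"]
      by (simp add: matrix_vector_mul_component y_def inner_commute)
    moreover have "P (A $ j) $ i = s (A $ j) (axis i 1)"
      by (simp add: cart_eq_inner_axis Pz)
    ultimately show ?thesis by (simp add: e_def column_def)
  qed
  have rowB: "B $ j \<in> span W" for j
  proof -
    have "B $ j \<in> rows B" by (auto simp: rows_def row_def)
    then show ?thesis using spW span_base by blast
  qed
  have E: "(\<Sum>i\<in>UNIV. e i \<bullet> e i) \<le> frob_sq (A - B)"
  proof -
    have "(\<Sum>i\<in>UNIV. e i \<bullet> e i) = (\<Sum>j\<in>UNIV. (A $ j - P (A $ j)) \<bullet> (A $ j - P (A $ j)))"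
      by (simp add: inner_vec_def ecomp) (rule sum.swap)
    also have "\<dots> \<le> (\<Sum>j\<in>UNIV. (A - B) $ j \<bullet> (A - B) $ j)"
    proof (rule sum_mono)
      fix j
      have "A $ j - P (A $ j) = (A $ j - B $ j) - P (A $ j - B $ j)"
        by (simp add: Plin Pid rowB)
      then show "(A $ j - P (A $ j)) \<bullet> (A $ j - P (A $ j)) \<le> (A - B) $ j \<bullet> (A - B) $ j"
        using Pcontr[of "A $ j - B $ j"] by (simp only: vector_minus_component)
    qed
    also have "\<dots> = frob_sq (A - B)"
      by (simp add: frob_sq_def inner_vec_def power2_eq_square)
    finally show ?thesis .
  qed
  show ?thesis using dec Y E by blast
qed


lemma pinv_sym_props:
  fixes M :: "real^'n^'n"
  assumes sym: "transpose M = M"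
  shows "transpose (pinv M) = pinv M \<and> pinv M ** M ** pinv M = pinv M"
proof -
  have "pinv M = XM M"
    unfolding pinv_def
  proof (rule the_equality)
    show "M ** XM M ** M = M \<and> XM M ** M ** XM M = XM M \<and>
          transpose (M ** XM M) = M ** XM M \<and> transpose (XM M ** M) = XM M ** M"
      by (rule XM_penrose[OF sym])
  next
    fix X assume "M ** X ** M = M \<and> X ** M ** X = X \<and> transpose (M ** X) = M ** X \<and> transpose (X ** M) = X ** M"
    then show "X = XM M" using XM_penrose[OF sym] mp_unique by blast
  qed
  moreover have "transpose (XM M) = XM M"
    by (rule sym_from_inner[OF sym]) (simp add: XM_app[OF sym] gM_sym[OF sym])
  ultimately show ?thesis using XM_penrose[OF sym] by simp
qed

lemma mat_mv: "mat c *v x = c *\<^sub>R (x::real^'n)"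
  by (simp add: vec_eq_iff matrix_vector_mult_def mat_def if_distrib if_distribR cong: if_cong)

lemma transpose_add': "transpose (P + Q) = transpose P + transpose (Q :: real^'a^'b)"
  by (simp add: transpose_def vec_eq_iff)

theorem mainTheorem1:
  fixes A :: "real^'d^'n" and k :: nat
  assumes "k > 0"
  shows "(\<Sum>i\<in>UNIV. ridge_lev A k i) \<le> 2 * real k"
proof -
  define err where "err = best_rank_err A k"
  define lam where "lam = err / real k"
  define M where "M = A ** transpose A + mat lam"
  define X where "X = pinv M"
  define S where "S = (\<Sum>i\<in>UNIV. ridge_lev A k i)"
  define u where "u i = X *v column i A" for i
  define v where "v i = transpose A *v u i" for i
  let ?Set = "{frob_sq (A - B) | B :: real^'d^'n. rank B \<le> k}"
  have symM: "transpose M = M"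
    by (simp add: M_def transpose_add' matrix_transpose_mul)
  have Xs: "transpose X = X" and XMX: "X ** M ** X = X"
    using pinv_sym_props[OF symM] by (auto simp: X_def)
  have frob_nn: "0 \<le> frob_sq C" for C :: "real^'d^'n"
    by (simp add: frob_sq_def sum_nonneg)
  have "frob_sq (A - 0) \<in> ?Set" by (auto intro!: exI[of _ 0])
  then have ne: "?Set \<noteq> {}" by blast
  have bdd: "bdd_below ?Set" by (rule bdd_belowI[of _ 0]) (auto simp: frob_nn)
  have err_nn: "0 \<le> err" unfolding err_def best_rank_err_def
    by (rule cInf_greatest[OF ne]) (auto simp: frob_nn)
  have err_le: "err \<le> frob_sq (A - B)" if "rank B \<le> k" for B :: "real^'d^'n"
    unfolding err_def best_rank_err_def by (rule cInf_lower[OF _ bdd]) (use that in blast)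
  have kpos: "real k > 0" using assms by simp
  have lam_nn: "0 \<le> lam" using err_nn kpos by (simp add: lam_def)
  have err_eq: "err = lam * real k" using kpos by (simp add: lam_def)
  have rl: "ridge_lev A k i = column i A \<bullet> u i" for i
    by (simp add: ridge_lev_def u_def X_def M_def lam_def err_def)
  have colid: "column i A \<bullet> u i = v i \<bullet> v i + lam * (u i \<bullet> u i)" for i
  proof -
    have "u i \<bullet> (M *v u i) = column i A \<bullet> (transpose X *v (M *v (X *v column i A)))"
      by (simp add: u_def inner_mv)
    also have "\<dots> = column i A \<bullet> u i"
      using XMX by (simp add: Xs matrix_vector_mul_assoc matrix_mul_assoc u_def)
    finally have 1: "u i \<bullet> (M *v u i) = column i A \<bullet> u i" .
    have "u i \<bullet> (M *v u i) = u i \<bullet> (A *v v i) + lam * (u i \<bullet> u i)"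
      by (simp add: M_def matrix_vector_mult_add_rdistrib mat_mv inner_add_right v_def
          flip: matrix_vector_mul_assoc)
    also have "u i \<bullet> (A *v v i) = v i \<bullet> v i"
      unfolding v_def by (metis inner_commute inner_mv)
    finally show ?thesis using 1 by simp
  qed
  have Ssum: "S = (\<Sum>i\<in>UNIV. v i \<bullet> v i) + lam * (\<Sum>i\<in>UNIV. u i \<bullet> u i)"
    by (simp add: S_def rl colid sum.distrib sum_distrib_left)
  have keyB: "\<exists>E. E \<le> frob_sq (A - B) \<and> 0 \<le> E \<and>
      (\<exists>y e. (\<Sum>i\<in>UNIV. y i \<bullet> y i) \<le> real k \<and> (\<Sum>i\<in>UNIV. e i \<bullet> e i) = E \<and>
        S = (\<Sum>i\<in>UNIV. y i \<bullet> v i) + (\<Sum>i\<in>UNIV. e i \<bullet> u i))"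
    if rB0: "rank B \<le> k" for B :: "real^'d^'n"
  proof -
    obtain y e where dec: "\<forall>i. column i A = A *v y i + e i" and Y: "(\<Sum>i\<in>UNIV. y i \<bullet> y i) \<le> real k"
      and E: "(\<Sum>i\<in>UNIV. e i \<bullet> e i) \<le> frob_sq (A - B)"
      using approx_lemma[of B k A] rB0 by blast
    have "column i A \<bullet> u i = y i \<bullet> v i + e i \<bullet> u i" for i
      using dec by (simp add: inner_add_left inner_mv v_def)
    then have "S = (\<Sum>i\<in>UNIV. y i \<bullet> v i) + (\<Sum>i\<in>UNIV. e i \<bullet> u i)"
      by (simp add: S_def rl sum.distrib)
    moreover have "0 \<le> (\<Sum>i\<in>UNIV. e i \<bullet> e i)" by (simp add: sum_nonneg)
    ultimately show ?thesis using Y E by blast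
  qed
  have yv: "y \<bullet> w \<le> (y \<bullet> y + w \<bullet> w) / 2" for y w :: "'z::real_inner"
  proof -
    have "0 \<le> (y - w) \<bullet> (y - w)" by simp
    then show ?thesis by (simp add: inner_diff_left inner_diff_right inner_commute)
  qed
  show ?thesis
  proof (cases "lam > 0")
    case True
    have "lam * (S - real k) \<le> frob_sq (A - B)" if rB1: "rank B \<le> k" for B :: "real^'d^'n"
    proof -
      obtain E y e where EF: "E \<le> frob_sq (A - B)" and E0: "0 \<le> E"
        and Y: "(\<Sum>i\<in>UNIV. y i \<bullet> y i) \<le> real k" and Ee: "(\<Sum>i\<in>UNIV. e i \<bullet> e i) = E"
        and Sd: "S = (\<Sum>i\<in>UNIV. y i \<bullet> v i) + (\<Sum>i\<in>UNIV. e i \<bullet> u i)"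
        using keyB[OF rB1] by blast
      have eu: "e i \<bullet> u i \<le> (e i \<bullet> e i / lam + lam * (u i \<bullet> u i)) / 2" for i
      proof -
        have "0 \<le> (e i - lam *\<^sub>R u i) \<bullet> (e i - lam *\<^sub>R u i)" by simp
        then have "2 * lam * (e i \<bullet> u i) \<le> e i \<bullet> e i + lam * lam * (u i \<bullet> u i)"
          by (simp add: inner_diff_left inner_diff_right inner_commute algebra_simps)
        then show ?thesis using True by (simp add: field_simps)
      qed
      have "S \<le> (\<Sum>i\<in>UNIV. (y i \<bullet> y i + v i \<bullet> v i) / 2) +
               (\<Sum>i\<in>UNIV. (e i \<bullet> e i / lam + lam * (u i \<bullet> u i)) / 2)"
        unfolding Sd by (intro add_mono sum_mono yv eu)
      also have "\<dots> = ((\<Sum>i\<in>UNIV. y i \<bullet> y i) + (\<Sum>i\<in>UNIV. e i \<bullet> e i) / lam + S) / 2"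
        by (simp add: Ssum sum.distrib sum_divide_distrib sum_distrib_left add_divide_distrib)
      finally have "S \<le> real k + E / lam" using Y Ee by simp
      then have "lam * (S - real k) \<le> E" using True by (simp add: field_simps)
      then show ?thesis using EF by simp
    qed
    then have "lam * (S - real k) \<le> err"
      unfolding err_def best_rank_err_def by (intro cInf_greatest[OF ne]) auto
    then have "lam * (S - real k) \<le> lam * real k" using err_eq by simp
    then have "S - real k \<le> real k" using True by simp
    then show ?thesis by (simp add: S_def)
  next
    case False
    then have lam0: "lam = 0" using lam_nn by simp
    then have err0: "err = 0" using err_eq by simp
    define C where "C = (\<Sum>i\<in>UNIV. norm (u i))"
    have C0: "0 \<le> C" by (simp add: C_def sum_nonneg)
    have "S \<le> real k + \<delta>" if dpos: "\<delta> > 0" for \<delta>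
    proof -
      define \<epsilon> where "\<epsilon> = (\<delta> / (2 * C + 1))^2"
      have epos: "\<epsilon> > 0" using dpos C0 by (simp add: \<epsilon>_def)
      have "Inf ?Set < \<epsilon>" using err0 epos by (simp add: err_def best_rank_err_def)
      then obtain F where "F \<in> ?Set" "F < \<epsilon>" using cInf_lessD[OF ne] by blast
      then obtain B :: "real^'d^'n" where rB: "rank B \<le> k" and FB: "frob_sq (A - B) < \<epsilon>" by blast
      obtain E y e where EF: "E \<le> frob_sq (A - B)" and E0: "0 \<le> E"
        and Y: "(\<Sum>i\<in>UNIV. y i \<bullet> y i) \<le> real k" and Ee: "(\<Sum>i\<in>UNIV. e i \<bullet> e i) = E"
        and Sd: "S = (\<Sum>i\<in>UNIV. y i \<bullet> v i) + (\<Sum>i\<in>UNIV. e i \<bullet> u i)"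
        using keyB[OF rB] by blast
      have sq: "sqrt E \<le> \<delta> / (2 * C + 1)"
      proof -
        have "sqrt E \<le> sqrt \<epsilon>" using EF FB by simp
        also have "\<dots> = \<delta> / (2 * C + 1)" using dpos C0 by (simp add: \<epsilon>_def)
        finally show ?thesis .
      qed
      have enorm: "norm (e i) \<le> sqrt E" for i
      proof -
        have "e i \<bullet> e i \<le> (\<Sum>j\<in>UNIV. e j \<bullet> e j)"
          by (rule member_le_sum) auto
        then show ?thesis using Ee by (simp add: norm_eq_sqrt_inner)
      qed
      have eu: "e i \<bullet> u i \<le> sqrt E * norm (u i)" for i
      proof -
        have "e i \<bullet> u i \<le> norm (e i) * norm (u i)" by (rule norm_cauchy_schwarz)
        also have "\<dots> \<le> sqrt E * norm (u i)" by (rule mult_right_mono[OF enorm]) simp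
        finally show ?thesis .
      qed
      have "S \<le> (\<Sum>i\<in>UNIV. (y i \<bullet> y i + v i \<bullet> v i) / 2) + (\<Sum>i\<in>UNIV. sqrt E * norm (u i))"
        unfolding Sd by (intro add_mono sum_mono yv eu)
      also have "\<dots> = ((\<Sum>i\<in>UNIV. y i \<bullet> y i) + S) / 2 + sqrt E * C"
        by (simp add: Ssum lam0 sum.distrib sum_divide_distrib sum_distrib_left C_def add_divide_distrib)
      finally have "S \<le> real k + 2 * (sqrt E * C)" using Y by argo
      also have "2 * (sqrt E * C) \<le> \<delta>"
      proof -
        have h: "sqrt E * C \<le> \<delta> / (2 * C + 1) * C" by (rule mult_right_mono[OF sq C0])
        have h2: "2 * (\<delta> / (2 * C + 1) * C) \<le> \<delta>" using dpos C0 by (simp add: field_simps)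
        show ?thesis using h h2 by linarith
      qed
      finally show ?thesis by simp
    qed
    then have "S \<le> real k" by (rule field_le_epsilon)
    then show ?thesis using kpos by (simp add: S_def)
  qed
qed

end
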